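(* Let $n \ge 1$ and let $G$ be a subgroup of $\mathrm{SL}_n(\mathbb{R})$ containing $\mathrm{SO}_n(\mathbb{R})$. Then $G = \mathrm{SL}_n(\mathbb{R})$ or $G = \mathrm{SO}_n(\mathbb{R})$.
   Context: $G$ is not assumed to be closed. *)

theory Defs
  imports "HOL-Analysis.Analysis"
begin

definition SL :: "(real^'n^'n) set" where
  "SL = {A. det A = 1}"

definition SO :: "(real^'n^'n) set" where
  "SO = {A. orthogonal_matrix A \<and> det A = 1}"

definition subgroup_SL :: "(real^'n^'n) set \<Rightarrow> bool" where
  "subgroup_SL G \<longleftrightarrow> G \<subseteq> SL \<and> mat 1 \<in> G \<and>
     (\<forall>A\<in>G. \<forall>B\<in>G. A ** B \<in> G) \<and> (\<forall>A\<in>G. matrix_inv A \<in> G)"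

end

theory Submission
  imports Defs
begin


lemma half_angle:
  fixes C S :: real
  assumes "C^2 + S^2 = 1"
  shows "\<exists>c s. c^2 + s^2 = 1 \<and> c^2 - s^2 = C \<and> 2 * c * s = S"
proof (cases "C = -1")
  case True
  then have "S = 0" using assms by (simp add: power2_eq_square)
  then show ?thesis using True by (intro exI[of _ 0] exI[of _ 1]) simp
next
  case False
  have C1: "C \<ge> -1" "C \<le> 1" using assms abs_square_le_1 [of C]
    by (smt (verit) power2_less_eq_zero_iff zero_le_power2)+
  with False have Cp: "1 + C > 0" by simp
  define c where "c = sqrt ((1 + C)/2)"
  have c2: "c^2 = (1 + C)/2" using Cp unfolding c_def by simp
  have cp: "c > 0" using Cp unfolding c_def by simp
  define s where "s = S / (2 * c)"
  have s2: "s^2 = (1 - C)/2"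
  proof -
    have "s^2 = S^2 / (4 * c^2)" unfolding s_def by (simp add: power_divide power_mult_distrib)
    also have "\<dots> = (1 - C^2) / (2 * (1 + C))"
    proof -
      have "S^2 = 1 - C^2" "4 * c^2 = 2 * (1 + C)" using assms c2 by simp_all
      then show ?thesis by simp
    qed
    also have "\<dots> = (1 - C)/2" using Cp by (simp add: field_simps power2_eq_square)
    finally show ?thesis .
  qed
  have "2 * c * s = S" unfolding s_def using cp by simp
  then show ?thesis using c2 s2 by (intro exI[of _ c] exI[of _ s]) simp
qed

lemma rot2:
  fixes p q r p2 q2 r2 :: real
  assumes tr: "p + r = p2 + r2" and dt: "p * r - q^2 = p2 * r2 - q2^2"
  shows "\<exists>c s. c^2+s^2=1 \<and> p * c^2 + 2 * q * c * s + r * s^2 = p2 \<and>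
      q * (c^2-s^2) + (r-p) * c * s = q2 \<and> p * s^2 - 2 * q * c * s + r * c^2 = r2"
proof -
  define u v u2 v2 where "u = (p-r)/2" "v = q" "u2 = (p2-r2)/2" "v2 = q2"
  have nrm: "u^2 + v^2 = u2^2 + v2^2"
  proof -
    have "u^2 + v^2 = (p+r)^2/4 - (p * r - q^2)" unfolding u_v_u2_v2_def by (simp add: power2_eq_square field_simps)
    also have "\<dots> = (p2+r2)^2/4 - (p2 * r2 - q2^2)" using tr dt by simp
    also have "\<dots> = u2^2 + v2^2" unfolding u_v_u2_v2_def by (simp add: power2_eq_square field_simps)
    finally show ?thesis .
  qed
  obtain C S where CS: "C^2 + S^2 = 1" "C * u + S * v = u2" "- S * u + C * v = v2"
  proof (cases "u^2 + v^2 = 0")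
    case True
    then have "u = 0" "v = 0" "u2 = 0" "v2 = 0" using nrm by (simp_all add: add_nonneg_eq_0_iff)
    then show ?thesis using that[of 1 0] by simp
  next
    case False
    define \<rho> where "\<rho> = u^2 + v^2"
    have rp: "\<rho> \<noteq> 0" using False \<rho>_def by simp
    define C S where "C = (u * u2 + v * v2)/\<rho>" "S = (v * u2 - u * v2)/\<rho>"
    have "C^2 + S^2 = ((u * u2 + v * v2)^2 + (v * u2 - u * v2)^2)/\<rho>^2"
      unfolding C_S_def by (simp only: power_divide add_divide_distrib[symmetric])
    also have "(u * u2 + v * v2)^2 + (v * u2 - u * v2)^2 = (u^2+v^2) * (u2^2+v2^2)"
      by (simp add: power2_eq_square algebra_simps)
    also have "\<dots> = \<rho>^2" using nrm \<rho>_def by (simp add: power2_eq_square)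
    finally have 1: "C^2 + S^2 = 1" using rp by simp
    have 2: "C * u + S * v = u2"
    proof -
      have "C * u + S * v = ((u * u2 + v * v2) * u + (v * u2 - u * v2) * v) / \<rho>"
        unfolding C_S_def using rp by (simp add: field_simps)
      also have "(u * u2 + v * v2) * u + (v * u2 - u * v2) * v = u2 * \<rho>"
        unfolding \<rho>_def by (simp add: algebra_simps power2_eq_square)
      finally show ?thesis using rp by simp
    qed
    have 3: "- S * u + C * v = v2"
    proof -
      have "- S * u + C * v = ((u * u2 + v * v2) * v - (v * u2 - u * v2) * u) / \<rho>"
        unfolding C_S_def using rp by (simp add: field_simps)
      also have "(u * u2 + v * v2) * v - (v * u2 - u * v2) * u = v2 * \<rho>"
        unfolding \<rho>_def by (simp add: algebra_simps power2_eq_square)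
      finally show ?thesis using rp by simp
    qed
    show ?thesis using that[OF 1 2 3] .
  qed
  obtain c s where cs: "c^2 + s^2 = 1" "c^2 - s^2 = C" "2 * c * s = S"
    using half_angle[OF CS(1)] by blast
  have c2: "c^2 = (1 + C)/2" and s2: "s^2 = (1 - C)/2" using cs by auto
  show ?thesis
  proof (rule exI[of _ c], rule exI[of _ s], intro conjI)
    show "c^2 + s^2 = 1" using cs(1) by simp
    have "p * c^2 + 2 * q * c * s + r * s^2 = (p+r)/2 + C * u + S * v"
      unfolding c2 s2 mult.assoc[of 2 c s] u_v_u2_v2_def using cs(3)[symmetric] by (simp add: field_simps mult.assoc)
    then show "p * c^2 + 2 * q * c * s + r * s^2 = p2" using CS(2) tr unfolding u_v_u2_v2_def by (simp add: field_simps)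
    have "q * (c^2-s^2) + (r-p) * c * s = - S * u + C * v"
      unfolding cs(2) u_v_u2_v2_def mult.assoc[of "r-p" c s] using cs(3)[symmetric] by (simp add: field_simps mult.assoc)
    then show "q * (c^2-s^2) + (r-p) * c * s = q2" using CS(3) unfolding u_v_u2_v2_def by (simp add: field_simps)
    have "p * s^2 - 2 * q * c * s + r * c^2 = (p+r)/2 - (C * u + S * v)"
      unfolding c2 s2 mult.assoc[of 2 c s] u_v_u2_v2_def using cs(3)[symmetric] by (simp add: field_simps mult.assoc)
    then show "p * s^2 - 2 * q * c * s + r * c^2 = r2" using CS(2) tr unfolding u_v_u2_v2_def by (simp add: field_simps)
  qed
qed


definition pl :: "'n \<Rightarrow> 'n \<Rightarrow> real \<Rightarrow> real \<Rightarrow> real \<Rightarrow> real \<Rightarrow> real^'n^'n" where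
 "pl i j p q r s = (\<chi> k l. if k = i \<and> l = i then p else if k = i \<and> l = j then q else
    if k = j \<and> l = i then r else if k = j \<and> l = j then s else if k = l then 1 else 0)"

lemma pl_entry: "pl i j p q r s $ k $ l = (if k = i \<and> l = i then p else if k = i \<and> l = j then q else
    if k = j \<and> l = i then r else if k = j \<and> l = j then s else if k = l then 1 else 0)"
  by (simp add: pl_def)

lemma pl_mult:
  fixes i j :: "'n::finite" and p q r s p2 q2 r2 s2 :: real
  assumes "i \<noteq> j"
  shows "pl i j p q r s ** pl i j p2 q2 r2 s2 = pl i j (p * p2 + q * r2) (p * q2 + q * s2) (r * p2 + s * r2) (r * q2 + s * s2)"
proof -
  have *: "(\<Sum>m\<in>UNIV. (pl i j p q r s)$k$m * (pl i j p2 q2 r2 s2)$m$l) = (pl i j (p * p2 + q * r2) (p * q2 + q * s2) (r * p2 + s * r2) (r * q2 + s * s2))$k$l" for k l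
  proof -
    have "(\<Sum>m\<in>UNIV. (pl i j p q r s)$k$m * (pl i j p2 q2 r2 s2)$m$l) = 
          (\<Sum>m\<in>{i,j} \<union> {k}. (pl i j p q r s)$k$m * (pl i j p2 q2 r2 s2)$m$l)"
      by (rule sum.mono_neutral_right) (auto simp: pl_entry)
    also have "\<dots> = (pl i j (p * p2 + q * r2) (p * q2 + q * s2) (r * p2 + s * r2) (r * q2 + s * s2))$k$l"
    proof (cases "k = i \<or> k = j")
      case True
      then have e: "{i,j} \<union> {k} = {i,j}" by auto
      show ?thesis unfolding e using assms True
        by (cases "k = i"; cases "l = i"; cases "l = j") (simp_all add: pl_entry)
    next
      case False
      then have e: "{i,j} \<union> {k} = insert k {i,j}" by auto
      show ?thesis unfolding e using assms False
        by (cases "l = i"; cases "l = j"; cases "l = k") (simp_all add: pl_entry)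
    qed
    finally show ?thesis .
  qed
  show ?thesis by (simp only: matrix_matrix_mult_def *) (simp add: vec_eq_iff)
qed

lemma pl_transpose:
  assumes "i \<noteq> j"
  shows "transpose (pl i j p q r s) = pl i j p r q s"
  unfolding vec_eq_iff
proof (intro allI)
  fix k l
  show "transpose (pl i j p q r s) $ k $ l = pl i j p r q s $ k $ l"
    unfolding transpose_def vec_lambda_beta pl_entry using assms
    by (cases "k = i"; cases "k = j"; cases "l = i"; cases "l = j") simp_all
qed

lemma pl_one:
  assumes "i \<noteq> j"
  shows "pl i j 1 0 0 1 = mat 1"
  unfolding vec_eq_iff
proof (intro allI)
  fix k l
  show "pl i j 1 0 0 1 $ k $ l = mat 1 $ k $ l"
    unfolding mat_def vec_lambda_beta pl_entry using assms
    by (cases "k = i"; cases "k = j"; cases "l = i"; cases "l = j") simp_all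
qed

lemma pl_swap:
  assumes "i \<noteq> j"
  shows "pl i j p q r s = pl j i s r q p"
  unfolding vec_eq_iff
proof (intro allI)
  fix k l
  show "pl i j p q r s $ k $ l = pl j i s r q p $ k $ l"
    unfolding pl_entry using assms
    by (cases "k = i"; cases "k = j"; cases "l = i"; cases "l = j") simp_all
qed

lemma pl_mv:
  fixes i j :: "'n::finite"
  assumes "i \<noteq> j"
  shows "pl i j p q r s *v v = (\<chi> k. if k = i then p * v$i + q * v$j else if k = j then r * v$i + s * v$j else v$k)"
proof -
  have *: "(\<Sum>m\<in>UNIV. (pl i j p q r s)$k$m * v$m) = (if k = i then p * v$i + q * v$j else if k = j then r * v$i + s * v$j else v$k)" for k
  proof -
    have "(\<Sum>m\<in>UNIV. (pl i j p q r s)$k$m * v$m) = (\<Sum>m\<in>{i,j} \<union> {k}. (pl i j p q r s)$k$m * v$m)"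
      by (rule sum.mono_neutral_right) (auto simp: pl_entry)
    also have "\<dots> = (if k = i then p * v$i + q * v$j else if k = j then r * v$i + s * v$j else v$k)"
    proof (cases "k = i \<or> k = j")
      case True
      then have e: "{i,j} \<union> {k} = {i,j}" by auto
      show ?thesis unfolding e using assms True
        by (cases "k = i") (simp_all add: pl_entry)
    next
      case False
      then have e: "{i,j} \<union> {k} = insert k {i,j}" by auto
      show ?thesis unfolding e using assms False by (simp add: pl_entry)
    qed
    finally show ?thesis .
  qed
  show ?thesis by (simp only: matrix_vector_mult_def *)
qed

lemma det_pl_diag:
  fixes i j :: "'n::finite"
  assumes "i \<noteq> j"
  shows "det (pl i j a 0 0 b) = a * b"
proof -
  have z: "pl i j a 0 0 b $ k $ l = 0" if "k \<noteq> l" for k l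
    using that assms by (cases "k = i"; cases "l = i"; cases "k = j"; cases "l = j") (simp_all add: pl_entry)
  have "det (pl i j a 0 0 b) = prod (\<lambda>k. (pl i j a 0 0 b)$k$k) UNIV"
    by (rule det_diagonal[OF z])
  also have "\<dots> = prod (\<lambda>k. (pl i j a 0 0 b)$k$k) {i,j}"
    by (rule prod.mono_neutral_right) (auto simp: pl_entry)
  also have "\<dots> = a * b" using assms by (simp add: pl_entry)
  finally show ?thesis .
qed

lemma det_pl_E:
  fixes i j :: "'n::finite"
  assumes "i \<noteq> j"
  shows "det (pl i j 1 t 0 1) = 1"
proof -
  have "pl i j 1 t 0 1 = (\<chi> k. if k = i then row i (mat 1) + t *s row j (mat 1) else row k (mat 1 :: real^'n^'n))"
    unfolding vec_eq_iff
  proof (intro allI)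
    fix k l
    show "pl i j 1 t 0 1 $ k $ l = (\<chi> k. if k = i then row i (mat 1) + t *s row j (mat 1) else row k (mat 1 :: real^'n^'n)) $ k $ l"
      unfolding pl_entry row_def mat_def using assms
      by (cases "k = i"; cases "k = j"; cases "l = i"; cases "l = j") simp_all
  qed
  then show ?thesis using det_row_operation[OF assms, of "mat 1 :: real^'n^'n" t] by simp
qed

definition rot :: "'n \<Rightarrow> 'n \<Rightarrow> real \<Rightarrow> real \<Rightarrow> real^'n^'n" where
  "rot i j c s = pl i j c (- s) s c"

lemma rot_orth:
  assumes "i \<noteq> j" "c^2 + s^2 = 1"
  shows "orthogonal_matrix (rot i j c s)"
proof -
  have e: "c * c + s * s = 1" "c * (- s) + s * c = 0" "- s * c + c * s = 0" "- s * - s + c * c = 1"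
    using assms(2) by (simp_all add: power2_eq_square algebra_simps)
  have "transpose (rot i j c s) ** rot i j c s = pl i j (c * c + s * s) (c * (- s) + s * c) (- s * c + c * s) (- s * - s + c * c)"
    unfolding rot_def by (simp only: pl_transpose[OF assms(1)] pl_mult[OF assms(1)])
  also have "\<dots> = mat 1" unfolding e by (rule pl_one[OF assms(1)])
  finally show ?thesis unfolding orthogonal_matrix .
qed

lemma rot_det:
  fixes i j :: "'n::finite"
  assumes "i \<noteq> j" "c^2 + s^2 = 1"
  shows "det (rot i j c s) = 1"
proof -
  obtain c1 s1 where cs: "c1^2 + s1^2 = 1" "c1^2 - s1^2 = c" "2 * c1 * s1 = s"
    using half_angle[OF assms(2)] by blast
  have e: "c1 * c1 + - s1 * s1 = c" "c1 * - s1 + - s1 * c1 = - s" "s1 * c1 + c1 * s1 = s" "s1 * - s1 + c1 * c1 = c"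
    using cs(2,3) by (simp_all add: power2_eq_square algebra_simps)
  have "rot i j c1 s1 ** rot i j c1 s1 = rot i j c s"
    unfolding rot_def pl_mult[OF assms(1)] e ..
  then have "det (rot i j c s) = det (rot i j c1 s1) ^ 2" by (metis det_mul power2_eq_square)
  moreover have "det (rot i j c1 s1) = 1 \<or> det (rot i j c1 s1) = -1"
    by (rule det_orthogonal_matrix, rule rot_orth[OF assms(1) cs(1)])
  ultimately show ?thesis by auto
qed

lemma rot_SO:
  fixes i j :: "'n::finite"
  assumes "i \<noteq> j" "c^2 + s^2 = 1"
  shows "rot i j c s \<in> SO"
  using rot_orth[OF assms] rot_det[OF assms] by (simp add: SO_def)



lemma minv:
  fixes A :: "real^'n^'n"
  assumes "det A \<noteq> 0"
  shows "A ** matrix_inv A = mat 1" "matrix_inv A ** A = mat 1"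
proof -
  have "invertible A" using assms invertible_det_nz by blast
  then have "A ** matrix_inv A = mat 1 \<and> matrix_inv A ** A = mat 1"
    unfolding matrix_inv_def invertible_def by (rule someI_ex)
  then show "A ** matrix_inv A = mat 1" "matrix_inv A ** A = mat 1" by auto
qed

lemma mul_cancel_r: "(X :: real^'n^'n) ** A ** B = X" if "A ** B = mat 1"
  by (metis matrix_mul_assoc matrix_mul_rid that)

lemma orth_cancel:
  fixes V X :: "real^'n^'n"
  assumes "orthogonal_matrix V"
  shows "X ** V ** transpose V = X" "X ** transpose V ** V = X"
    "V ** transpose V = mat 1" "transpose V ** V = mat 1"
  using assms mul_cancel_r[of V "transpose V" X] mul_cancel_r[of "transpose V" V X]
  unfolding orthogonal_matrix_def by auto

locale grp =
  fixes G :: "(real^'n^'n) set"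
  assumes sg: "subgroup_SL G" and so: "SO \<subseteq> G"
begin

lemma G_SL: "A \<in> G \<Longrightarrow> det A = 1" using sg by (auto simp: subgroup_SL_def SL_def)
lemma G_one: "mat 1 \<in> G" using sg by (auto simp: subgroup_SL_def)
lemma G_mul: "A \<in> G \<Longrightarrow> B \<in> G \<Longrightarrow> A ** B \<in> G" using sg by (auto simp: subgroup_SL_def)
lemma G_inv: "A \<in> G \<Longrightarrow> matrix_inv A \<in> G" using sg by (auto simp: subgroup_SL_def)
lemma G_SO: "orthogonal_matrix A \<Longrightarrow> det A = 1 \<Longrightarrow> A \<in> G" using so by (auto simp: SO_def)

lemma gram:
  assumes A: "A \<in> G" and B: "det B = 1" and V: "orthogonal_matrix V" "det V = 1"
    and H: "transpose B ** B = transpose V ** transpose A ** A ** V"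
  shows "B \<in> G"
proof -
  define Ai where "Ai = matrix_inv A"
  have dA: "det A = 1" using G_SL[OF A] .
  have AAi: "A ** Ai = mat 1" "Ai ** A = mat 1" using minv[of A] dA unfolding Ai_def by auto
  define U where "U = B ** transpose V ** Ai"
  have "transpose U ** U = transpose Ai ** V ** (transpose B ** B) ** transpose V ** Ai"
    unfolding U_def by (simp add: matrix_transpose_mul matrix_mul_assoc)
  also have "\<dots> = transpose Ai ** V ** (transpose V ** transpose A ** A ** V) ** transpose V ** Ai"
    using H by simp
  also have "\<dots> = transpose Ai ** transpose A ** A ** Ai"
    by (simp add: matrix_mul_assoc orth_cancel[OF V(1)])
  also have "\<dots> = transpose (A ** Ai) ** (A ** Ai)"
    by (simp add: matrix_transpose_mul matrix_mul_assoc)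
  also have "\<dots> = mat 1" using AAi by simp
  finally have oU: "orthogonal_matrix U" unfolding orthogonal_matrix .
  have "det A * det Ai = 1" using AAi(1) det_mul[of A Ai] by simp
  then have dAi: "det Ai = 1" using dA by simp
  have dU: "det U = 1" unfolding U_def using B V(2) dAi by (simp add: det_mul)
  have "U ** A ** V = B"
    unfolding U_def using AAi orth_cancel[OF V(1)] by (simp add: matrix_mul_assoc mul_cancel_r)
  moreover have "U ** A ** V \<in> G" using G_SO[OF oU dU] A G_SO[OF V] G_mul by blast
  ultimately show ?thesis by simp
qed

end


lemma pl_cong: "p = p' \<Longrightarrow> q = q' \<Longrightarrow> r = r' \<Longrightarrow> s = s' \<Longrightarrow> pl i j p q r s = pl i j p' q' r' s'"
  by simp

lemma aux_det:
  fixes u w c s :: real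
  assumes "u * w = 1"
  shows "(u^2 * c^2 + s^2) * (s^2 + c^2 * w^2) - (- (u * c * s) + c * s * w)^2 = (c^2 + s^2)^2"
proof -
  have "(u^2 * c^2 + s^2) * (s^2 + c^2 * w^2) - (- (u * c * s) + c * s * w)^2
      = (u * w)^2 * c^4 + s^4 + 2 * (u * w) * c^2 * s^2" by algebra
  also have "\<dots> = (c^2 + s^2)^2" using assms by algebra
  finally show ?thesis .
qed

context grp begin

lemma family:
  fixes i j :: 'n
  assumes ij: "i \<noteq> j" and a: "a > 1" and Dg: "pl i j a 0 0 (1/a) \<in> G"
    and B: "det (pl i j p q r s) = 1" "p * s - q * r = 1"
    and T: "p^2 + q^2 + r^2 + s^2 \<le> a^4 + 1/a^4"
  shows "pl i j p q r s \<in> G"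
proof -
  define K where "K = a^4 + 1/a^4"
  define T where "T = p^2 + q^2 + r^2 + s^2"
  have a0: "a \<noteq> 0" using a by simp
  have a4: "a^4 = a * (a * (a * a))" by (simp add: eval_nat_numeral)
  have T2: "T \<ge> 2"
  proof -
    have "0 \<le> (p - s)^2 + (q + r)^2" by simp
    then show ?thesis unfolding T_def using B(2) by (simp add: power2_eq_square algebra_simps)
  qed
  have e1: "(a^2)^2 = a^4" by (simp flip: power_mult)
  have e2: "(1/a^2)^2 = 1/a^4" using a0 by (simp add: power_divide e1)
  have e3: "a^2 * (1/a^2) = 1" using a0 by simp
  have K2: "K - 2 = (a^2 - 1/a^2)^2"
  proof -
    show ?thesis unfolding K_def power2_diff[of "a^2" "1/a^2"] e1 e2 e3 using a0 by simp
  qed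
  have "a^2 > 1" using a by (simp add: one_less_power)
  then have "1/a^2 < 1" by (simp add: divide_less_eq)
  with \<open>a^2 > 1\<close> have "a^2 - 1/a^2 \<noteq> 0" by linarith
  then have Kp: "K - 2 > 0" unfolding K2 by simp
  define \<sigma> where "\<sigma> = (K - T)/(K - 2)"
  have s0: "0 \<le> \<sigma>" unfolding \<sigma>_def using Kp T K_def T_def by simp
  have s1: "\<sigma> \<le> 1" unfolding \<sigma>_def using Kp T2 by simp
  have sK: "\<sigma> * (K - 2) = K - T" unfolding \<sigma>_def using Kp by simp
  define st where "st = sqrt \<sigma>"
  define ct where "ct = sqrt (1 - \<sigma>)"
  have st2: "st^2 = \<sigma>" unfolding st_def using s0 by simp
  have ct2: "ct^2 = 1 - \<sigma>" unfolding ct_def using s1 by simp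
  have cs1: "ct^2 + st^2 = 1" using st2 ct2 by simp
  define A where "A = pl i j a 0 0 (1/a) ** rot i j ct st ** pl i j a 0 0 (1/a)"
  have AG: "A \<in> G" unfolding A_def using Dg G_mul G_SO rot_orth[OF ij cs1] rot_det[OF ij cs1] by blast
  have Ae: "A = pl i j (a^2 * ct) (- st) st (ct / a^2)"
    unfolding A_def rot_def pl_mult[OF ij]
    apply (rule pl_cong) using a0 by (simp_all add: power2_eq_square field_simps)
  define P Q R where "P = (a^2)^2 * ct^2 + st^2" "Q = - (a^2 * ct * st) + ct * st * (1/a^2)" "R = st^2 + ct^2 * (1/a^2)^2"
  have GA: "transpose A ** A = pl i j P Q Q R"
    unfolding Ae pl_transpose[OF ij] pl_mult[OF ij] P_Q_R_def
    apply (rule pl_cong) using a0 by (simp_all add: power2_eq_square field_simps a4)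
  have tr: "P + R = (p^2 + r^2) + (q^2 + s^2)"
  proof -
    have "P + R = (1 - \<sigma>) * K + 2 * \<sigma>" unfolding P_Q_R_def K_def st2 ct2 e1 e2 using a0
      by (simp add: field_simps)
    also have "\<dots> = K - \<sigma> * (K - 2)" by (simp add: algebra_simps)
    also have "\<dots> = T" using sK by simp
    finally show ?thesis unfolding T_def by simp
  qed
  have dt: "P * R - Q^2 = (p^2 + r^2) * (q^2 + s^2) - (p * q + r * s)^2"
  proof -
    have "P * R - Q^2 = (ct^2 + st^2)^2" unfolding P_Q_R_def by (rule aux_det[OF e3])
    also have "\<dots> = 1" using cs1 by simp
    also have "\<dots> = (p * s - q * r)^2" using B(2) by simp
    also have "\<dots> = (p^2 + r^2) * (q^2 + s^2) - (p * q + r * s)^2"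
      by (simp add: power2_eq_square algebra_simps)
    finally show ?thesis .
  qed
  obtain c s' where cs: "c^2 + s'^2 = 1" "P * c^2 + 2 * Q * c * s' + R * s'^2 = p^2 + r^2"
    "Q * (c^2 - s'^2) + (R - P) * c * s' = p * q + r * s" "P * s'^2 - 2 * Q * c * s' + R * c^2 = q^2 + s^2"
    using rot2[OF tr dt] by blast
  define V where "V = rot i j c s'"
  have oV: "orthogonal_matrix V" "det V = 1" unfolding V_def using rot_orth[OF ij cs(1)] rot_det[OF ij cs(1)] by auto
  have "transpose V ** (transpose A ** A) ** V = pl i j (p^2 + r^2) (p * q + r * s) (p * q + r * s) (q^2 + s^2)"
    unfolding GA V_def rot_def pl_transpose[OF ij] pl_mult[OF ij]
    apply (rule pl_cong) using cs(2,3,4) by (simp_all add: power2_eq_square algebra_simps)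
  also have "\<dots> = transpose (pl i j p q r s) ** pl i j p q r s"
    unfolding pl_transpose[OF ij] pl_mult[OF ij]
    by (rule pl_cong) (simp_all add: power2_eq_square algebra_simps)
  finally have H: "transpose (pl i j p q r s) ** pl i j p q r s = transpose V ** transpose A ** A ** V"
    by (simp add: matrix_mul_assoc)
  show ?thesis by (rule gram[OF AG B(1) oV H])
qed

end


definition dg :: "('n \<Rightarrow> real) \<Rightarrow> real^'n^'n" where
  "dg f = (\<chi> k l. if k = l then f k else 0)"

lemma dg_entry: "dg f $ k $ l = (if k = l then f k else 0)" by (simp add: dg_def)

lemma dg_left: "(dg f ** A) $ k $ l = f k * A $ k $ l"
proof -
  have "(dg f ** A) $ k $ l = (\<Sum>m\<in>UNIV. dg f $ k $ m * A $ m $ l)" by (simp add: matrix_matrix_mult_def)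
  also have "\<dots> = (\<Sum>m\<in>{k}. dg f $ k $ m * A $ m $ l)"
    by (rule sum.mono_neutral_right) (auto simp: dg_entry)
  also have "\<dots> = f k * A $ k $ l" by (simp add: dg_entry)
  finally show ?thesis .
qed

lemma dg_right: "(A ** dg f) $ k $ l = A $ k $ l * f l"
proof -
  have "(A ** dg f) $ k $ l = (\<Sum>m\<in>UNIV. A $ k $ m * dg f $ m $ l)" by (simp add: matrix_matrix_mult_def)
  also have "\<dots> = (\<Sum>m\<in>{l}. A $ k $ m * dg f $ m $ l)"
    by (rule sum.mono_neutral_right) (auto simp: dg_entry)
  also have "\<dots> = A $ k $ l * f l" by (simp add: dg_entry)
  finally show ?thesis .
qed

lemma dg_mult: "dg f ** dg g = dg (\<lambda>k. f k * g k)"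
  unfolding vec_eq_iff dg_left by (simp add: dg_entry)

lemma dg_one: "dg (\<lambda>k. 1) = mat 1"
  unfolding vec_eq_iff by (simp add: dg_entry mat_def)

lemma dg_pl:
  assumes "i \<noteq> j"
  shows "pl i j b 0 0 c = dg (\<lambda>k. if k = i then b else if k = j then c else 1)"
  unfolding vec_eq_iff
proof (intro allI)
  fix k l
  show "pl i j b 0 0 c $ k $ l = dg (\<lambda>k. if k = i then b else if k = j then c else 1) $ k $ l"
    unfolding pl_entry dg_entry using assms
    by (cases "k = i"; cases "k = j"; cases "l = i"; cases "l = j"; cases "k = l") simp_all
qed

context grp begin

lemma transv:
  fixes i j :: 'n
  assumes HD: "\<And>i j. i \<noteq> j \<Longrightarrow> \<exists>a>1. pl i j a 0 0 (1/a) \<in> G" and ij: "i \<noteq> j"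
  shows "pl i j 1 t 0 1 \<in> G"
proof -
  obtain a where a: "a > 1" and Dg: "pl i j a 0 0 (1/a) \<in> G" using HD[OF ij] by blast
  define m where "m = a^2 - 1/a^2"
  have a0: "a \<noteq> 0" using a by simp
  have e1: "(a^2)^2 = a^4" by (simp flip: power_mult)
  have e2: "(1/a^2)^2 = 1/a^4" using a0 by (simp add: power_divide e1)
  have e3: "a^2 * (1/a^2) = 1" using a0 by simp
  have m2: "m^2 = a^4 + 1/a^4 - 2"
    unfolding m_def power2_diff[of "a^2" "1/a^2"] e1 e2 e3 using a0 by simp
  have "a^2 > 1" using a by (simp add: one_less_power)
  then have "1/a^2 < 1" by (simp add: divide_less_eq)
  with \<open>a^2 > 1\<close> have mp: "m > 0" unfolding m_def by linarith
  have small: "pl i j 1 u 0 1 \<in> G" if "\<bar>u\<bar> \<le> m" for u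
  proof (rule family[OF ij a Dg])
    show "det (pl i j 1 u 0 1) = 1" by (rule det_pl_E[OF ij])
    show "1 * 1 - u * 0 = 1" by simp
    have "u^2 \<le> m^2" using that mp by (simp add: abs_le_square_iff[symmetric])
    then show "1^2 + u^2 + 0^2 + 1^2 \<le> a^4 + 1/a^4" using m2 by simp
  qed
  obtain N :: nat where N: "\<bar>t\<bar> / m < real N" using reals_Archimedean2 by blast
  then have Np: "real N > 0" using mp by (smt (verit) divide_nonneg_pos abs_ge_zero)
  define u where "u = t / real N"
  have "\<bar>t\<bar> < real N * m" using N mp by (simp add: pos_divide_less_eq)
  then have "\<bar>t\<bar> / real N \<le> m" using Np by (simp add: pos_divide_le_eq mult.commute)
  then have "\<bar>u\<bar> \<le> m" unfolding u_def using Np by (simp add: abs_divide)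
  then have uG: "pl i j 1 u 0 1 \<in> G" by (rule small)
  have pw: "pl i j 1 (real k * u) 0 1 \<in> G" for k :: nat
  proof (induction k)
    case 0
    then show ?case using G_one pl_one[OF ij] by simp
  next
    case (Suc k)
    have "pl i j 1 (real k * u) 0 1 ** pl i j 1 u 0 1 = pl i j 1 (real (Suc k) * u) 0 1"
      unfolding pl_mult[OF ij] by (rule pl_cong) (simp_all add: algebra_simps)
    then show ?case using G_mul[OF Suc uG] by simp
  qed
  have "t = real N * u" unfolding u_def using Np by simp
  then show ?thesis using pw[of N] by simp
qed

lemma diagpl:
  fixes i j :: 'n
  assumes HD: "\<And>i j. i \<noteq> j \<Longrightarrow> \<exists>a>1. pl i j a 0 0 (1/a) \<in> G" and ij: "i \<noteq> j" and b: "b \<noteq> 0"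
  shows "pl i j b 0 0 (1/b) \<in> G"
proof -
  have E1: "pl i j 1 b 0 1 \<in> G" by (rule transv[OF HD ij])
  have E2: "pl i j 1 0 (-1/b) 1 \<in> G"
    using transv[OF HD ij[symmetric], of "-1/b"] pl_swap[OF ij[symmetric]] by simp
  have R: "rot i j 0 1 \<in> G" using rot_SO[OF ij, of 0 1] so by auto
  have "pl i j 1 b 0 1 ** pl i j 1 0 (-1/b) 1 ** pl i j 1 b 0 1 ** rot i j 0 1 = pl i j b 0 0 (1/b)"
    unfolding rot_def pl_mult[OF ij] by (rule pl_cong) (use b in simp_all)
  moreover have "pl i j 1 b 0 1 ** pl i j 1 0 (-1/b) 1 ** pl i j 1 b 0 1 ** rot i j 0 1 \<in> G"
    using E1 E2 R G_mul by blast
  ultimately show ?thesis by simp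
qed

lemma diagG:
  assumes HD: "\<And>i j. i \<noteq> j \<Longrightarrow> \<exists>a>1. pl i j a 0 0 (1/a) \<in> G"
    and nz: "\<And>k. f k \<noteq> 0" and p1: "prod f UNIV = 1"
  shows "dg f \<in> G"
proof -
  obtain i0 :: 'n where True by simp
  have step: "dg (\<lambda>k. if k \<in> S then f k else if k = i0 then inverse (prod f S) else 1) \<in> G"
    if "finite S" "i0 \<notin> S" for S
    using that
  proof (induction S rule: finite_induct)
    case empty
    have "(\<lambda>k. if k \<in> {} then f k else if k = i0 then inverse (prod f {}) else (1::real)) = (\<lambda>k. 1)" by auto
    then show ?case by (simp add: G_one dg_one)
  next
    case (insert x S)
    have xi: "x \<noteq> i0" using insert by auto
    have IH: "dg (\<lambda>k. if k \<in> S then f k else if k = i0 then inverse (prod f S) else 1) \<in> G"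
      using insert by auto
    have Dx: "dg (\<lambda>k. if k = x then f x else if k = i0 then 1 / f x else 1) \<in> G"
      using diagpl[OF HD xi nz[of x]] dg_pl[OF xi] by simp
    have "dg (\<lambda>k. if k \<in> S then f k else if k = i0 then inverse (prod f S) else 1) **
          dg (\<lambda>k. if k = x then f x else if k = i0 then 1 / f x else 1) =
          dg (\<lambda>k. if k \<in> insert x S then f k else if k = i0 then inverse (prod f (insert x S)) else 1)"
      unfolding dg_mult using insert xi by (intro arg_cong[where f = dg] ext) (auto simp: field_simps)
    then show ?case using G_mul[OF IH Dx] by simp
  qed
  have "dg (\<lambda>k. if k \<in> UNIV - {i0} then f k else if k = i0 then inverse (prod f (UNIV - {i0})) else 1) = dg f"
  proof (intro arg_cong[where f = dg] ext)
    fix k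
    have "prod f UNIV = f i0 * prod f (UNIV - {i0})"
      by (simp add: prod.remove)
    then have "inverse (prod f (UNIV - {i0})) = f i0" using p1 nz
      by (metis inverse_unique mult.commute)
    then show "(if k \<in> UNIV - {i0} then f k else if k = i0 then inverse (prod f (UNIV - {i0})) else 1) = f k"
      by auto
  qed
  then show ?thesis using step[of "UNIV - {i0}"] by simp
qed

end


lemma smul: "((c1::real) *\<^sub>R (X::real^'n^'n)) ** (c2 *\<^sub>R Y) = (c1 * c2) *\<^sub>R (X ** Y)"
  by (simp add: matrix_scalar_ac scalar_matrix_assoc[symmetric])

lemma det_smul: "det ((c::real) *\<^sub>R (A::real^'n^'n)) = c ^ CARD('n) * det A"
proof -
  have 1: "c *\<^sub>R A = (c *\<^sub>R mat 1) ** A" by (simp add: scalar_matrix_assoc[symmetric])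
  have 2: "c *\<^sub>R (mat 1 :: real^'n^'n) = matrix ((*\<^sub>R) c)" unfolding matrix_scaleR
    by (simp add: vec_eq_iff mat_def)
  show ?thesis unfolding 1 2 det_mul det_matrix_scaleR ..
qed

lemma det_dg: "det (dg g :: real^'n^'n) = prod g UNIV"
  by (subst det_diagonal) (simp_all add: dg_entry)

lemma diag_is_dg: "(\<And>i j. i \<noteq> j \<Longrightarrow> A $ i $ j = 0) \<Longrightarrow> A = dg (\<lambda>k. A $ k $ k)"
  by (auto simp: vec_eq_iff dg_entry)

lemma smul_dg: "c *\<^sub>R dg g = dg (\<lambda>k. c * g k)"
  by (simp add: vec_eq_iff dg_entry)

lemma transpose_dg: "transpose (dg g) = dg g"
  by (simp add: vec_eq_iff dg_entry transpose_def)

lemma idplus_pl: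
  assumes "m \<noteq> n"
  shows "(\<chi> i j. if i = m \<and> j = n then c else of_bool (i = j)) = pl m n 1 c 0 1"
  unfolding vec_eq_iff
proof (intro allI)
  fix k l
  show "(\<chi> i j. if i = m \<and> j = n then c else of_bool (i = j)) $ k $ l = pl m n 1 c 0 1 $ k $ l"
    unfolding pl_entry vec_lambda_beta using assms
    by (cases "k = m"; cases "k = n"; cases "l = m"; cases "l = n"; cases "k = l") simp_all
qed

lemma dg_conj_pl:
  assumes "m \<noteq> n" "\<And>k. f k * f k = 1"
  shows "dg f ** pl m n 1 c 0 1 ** dg f = pl m n 1 (f m * f n * c) 0 1"
  unfolding vec_eq_iff
proof (intro allI)
  fix k l
  have ff: "f k * f k = 1" by (rule assms(2))
  show "(dg f ** pl m n 1 c 0 1 ** dg f) $ k $ l = pl m n 1 (f m * f n * c) 0 1 $ k $ l"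
    unfolding dg_right dg_left pl_entry using assms(1) ff
    by (cases "k = m"; cases "k = n"; cases "l = m"; cases "l = n"; cases "k = l") (simp_all add: mult.commute)
qed

definition Sw :: "'n \<Rightarrow> 'n \<Rightarrow> real^'n^'n" where
  "Sw m n = (\<chi> i j. mat 1 $ i $ Transposition.transpose m n j)"

lemma Sw_det: "m \<noteq> n \<Longrightarrow> det (Sw m n) = -1"
  unfolding Sw_def
  by (subst det_permute_columns) (simp_all add: permutes_swap_id sign_swap_id)

lemma Sw_orth: "orthogonal_matrix (Sw m n)"
  unfolding orthogonal_matrix_orthonormal_columns
proof (intro conjI allI impI)
  have col: "column k (Sw m n) = axis (Transposition.transpose m n k) 1" for k
    by (simp add: Sw_def column_def axis_def mat_def vec_eq_iff)
  fix i j
  show "norm (column i (Sw m n)) = 1" unfolding col by simp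
  assume "i \<noteq> j"
  then have "Transposition.transpose m n i \<noteq> Transposition.transpose m n j"
    using transpose_eq_imp_eq by metis
  then show "orthogonal (column i (Sw m n)) (column j (Sw m n))"
    unfolding col orthogonal_def by (simp add: inner_axis_axis)
qed



context grp begin

lemma diagG':
  assumes HD: "\<And>i j. i \<noteq> j \<Longrightarrow> \<exists>a>1. pl i j a 0 0 (1/a) \<in> G"
    and d: "det (dg g) = 1"
  shows "dg g \<in> G"
proof (rule diagG[OF HD])
  show p: "prod g UNIV = 1" using d det_dg by metis
  show "g k \<noteq> 0" for k
  proof
    assume "g k = 0"
    then have "prod g UNIV = 0" by (simp add: prod_zero_iff) blast
    with p show False by simp
  qed
qed

lemma SL_sub:
  assumes HD: "\<And>i j. i \<noteq> j \<Longrightarrow> \<exists>a>1. pl i j a 0 0 (1/a) \<in> G"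
    and A1: "det A = 1"
  shows "A \<in> G"
proof -
  obtain i0 :: 'n where True by simp
  define fl where "fl = (\<lambda>k. if k = i0 then -1 else (1::real))"
  define F where "F = (dg fl :: real^'n^'n)"
  have fl2: "fl k * fl k = 1" for k unfolding fl_def by simp
  have FF: "F ** F = mat 1" unfolding F_def dg_mult fl2 dg_one ..
  have FFc: "X ** F ** F = X" for X :: "real^'n^'n" by (rule mul_cancel_r[OF FF])
  have oF: "orthogonal_matrix F" unfolding orthogonal_matrix F_def transpose_dg
    using FF F_def by simp
  have dF: "det F = -1"
  proof -
    have "det F = prod fl UNIV" unfolding F_def det_dg ..
    also have "\<dots> = fl i0 * prod fl (UNIV - {i0})" by (simp add: prod.remove)
    also have "prod fl (UNIV - {i0}) = 1" by (rule prod.neutral) (simp add: fl_def)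
    finally show ?thesis by (simp add: fl_def)
  qed
  have n0: "CARD('n) > 0" by simp
  define P where "P = (\<lambda>A::real^'n^'n. det A = 0 \<or>
     (det A > 0 \<and> (\<exists>c>0. c *\<^sub>R A \<in> G \<and> c *\<^sub>R (F ** A ** F) \<in> G)) \<or>
     (det A < 0 \<and> (\<exists>c>0. c *\<^sub>R (A ** F) \<in> G \<and> c *\<^sub>R (F ** A) \<in> G)))"
  have "P A"
  proof (rule induct_matrix_elementary)
    fix A B :: "real^'n^'n"
    assume PA: "P A" and PB: "P B"
    show "P (A ** B)"
    proof (cases "det A = 0 \<or> det B = 0")
      case True
      then show ?thesis unfolding P_def by (auto simp: det_mul)
    next
      case False
      have dm: "det (A ** B) = det A * det B" by (rule det_mul)
      consider "det A > 0" "det B > 0" | "det A > 0" "det B < 0" | "det A < 0" "det B > 0" | "det A < 0" "det B < 0"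
        using False by linarith
      then show ?thesis
      proof cases
        case 1
        then obtain c1 c2 where c: "c1 > 0" "c1 *\<^sub>R A \<in> G" "c1 *\<^sub>R (F ** A ** F) \<in> G"
           "c2 > 0" "c2 *\<^sub>R B \<in> G" "c2 *\<^sub>R (F ** B ** F) \<in> G"
          using PA PB unfolding P_def by auto
        have "(c1 * c2) *\<^sub>R (A ** B) \<in> G" using G_mul[OF c(2) c(5)] by (simp add: smul)
        moreover have "(c1 * c2) *\<^sub>R (F ** (A ** B) ** F) \<in> G"
        proof -
          have "F ** (A ** B) ** F = (F ** A ** F) ** (F ** B ** F)" by (simp add: matrix_mul_assoc FFc)
          then show ?thesis using G_mul[OF c(3) c(6)] by (simp add: smul)
        qed
        moreover have "det (A ** B) > 0" using 1 dm by simp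
        ultimately show ?thesis unfolding P_def using c(1,4) by (meson mult_pos_pos)
      next
        case 2
        then obtain c1 c2 where c: "c1 > 0" "c1 *\<^sub>R A \<in> G" "c1 *\<^sub>R (F ** A ** F) \<in> G"
           "c2 > 0" "c2 *\<^sub>R (B ** F) \<in> G" "c2 *\<^sub>R (F ** B) \<in> G"
          using PA PB unfolding P_def by auto
        have "(c1 * c2) *\<^sub>R (A ** B ** F) \<in> G" using G_mul[OF c(2) c(5)] by (simp add: smul matrix_mul_assoc)
        moreover have "(c1 * c2) *\<^sub>R (F ** (A ** B)) \<in> G"
        proof -
          have "F ** (A ** B) = (F ** A ** F) ** (F ** B)" by (simp add: matrix_mul_assoc FFc)
          then show ?thesis using G_mul[OF c(3) c(6)] by (simp add: smul)
        qed
        moreover have "det (A ** B) < 0" using 2 dm by (simp add: mult_pos_neg)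
        ultimately show ?thesis unfolding P_def using c(1,4) by (meson mult_pos_pos)
      next
        case 3
        then obtain c1 c2 where c: "c1 > 0" "c1 *\<^sub>R (A ** F) \<in> G" "c1 *\<^sub>R (F ** A) \<in> G"
           "c2 > 0" "c2 *\<^sub>R B \<in> G" "c2 *\<^sub>R (F ** B ** F) \<in> G"
          using PA PB unfolding P_def by auto
        have "(c1 * c2) *\<^sub>R (A ** B ** F) \<in> G"
        proof -
          have "A ** B ** F = (A ** F) ** (F ** B ** F)" by (simp add: matrix_mul_assoc FFc)
          then show ?thesis using G_mul[OF c(2) c(6)] by (simp add: smul)
        qed
        moreover have "(c1 * c2) *\<^sub>R (F ** (A ** B)) \<in> G"
          using G_mul[OF c(3) c(5)] by (simp add: smul matrix_mul_assoc)
        moreover have "det (A ** B) < 0" using 3 dm by (simp add: mult_neg_pos)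
        ultimately show ?thesis unfolding P_def using c(1,4) by (meson mult_pos_pos)
      next
        case 4
        then obtain c1 c2 where c: "c1 > 0" "c1 *\<^sub>R (A ** F) \<in> G" "c1 *\<^sub>R (F ** A) \<in> G"
           "c2 > 0" "c2 *\<^sub>R (B ** F) \<in> G" "c2 *\<^sub>R (F ** B) \<in> G"
          using PA PB unfolding P_def by auto
        have "(c1 * c2) *\<^sub>R (A ** B) \<in> G"
        proof -
          have "A ** B = (A ** F) ** (F ** B)" by (simp add: matrix_mul_assoc FFc)
          then show ?thesis using G_mul[OF c(2) c(6)] by (simp add: smul)
        qed
        moreover have "(c1 * c2) *\<^sub>R (F ** (A ** B) ** F) \<in> G"
        proof -
          have "F ** (A ** B) ** F = (F ** A) ** (B ** F)" by (simp add: matrix_mul_assoc)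
          then show ?thesis using G_mul[OF c(3) c(5)] by (simp add: smul)
        qed
        moreover have "det (A ** B) > 0" using 4 dm by (simp add: mult_neg_neg)
        ultimately show ?thesis unfolding P_def using c(1,4) by (meson mult_pos_pos)
      qed
    qed
  next
    fix A :: "real^'n^'n" and i
    assume "row i A = 0"
    then show "P A" unfolding P_def using det_zero_row(1) by blast
  next
    fix A :: "real^'n^'n"
    assume di: "\<And>i j. i \<noteq> j \<Longrightarrow> A $ i $ j = 0"
    define g where "g = (\<lambda>k. A $ k $ k)"
    have Ag: "A = dg g" unfolding g_def by (rule diag_is_dg[OF di])
    have comm: "F ** A = A ** F" unfolding Ag F_def dg_mult by (simp add: mult.commute)
    have FAF: "F ** A ** F = A" by (simp add: comm flip: matrix_mul_assoc) (simp add: FF)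
    show "P A"
    proof (cases "det A = 0")
      case True then show ?thesis unfolding P_def by simp
    next
      case False
      show ?thesis
      proof (cases "det A > 0")
        case True
        define c where "c = root CARD('n) (1 / det A)"
        have cp: "c > 0" unfolding c_def using True n0 by simp
        have cn: "c ^ CARD('n) = 1 / det A" unfolding c_def using True n0 by (simp add: real_root_pow_pos)
        have "det (c *\<^sub>R A) = 1" unfolding det_smul cn using True by simp
        then have "c *\<^sub>R A \<in> G" unfolding Ag smul_dg by (intro diagG'[OF HD]) (simp add: smul_dg)
        then show ?thesis unfolding P_def FAF using True cp by auto
      next
        case neg: False
        with False have dn: "det A < 0" by simp
        define c where "c = root CARD('n) (- 1 / det A)"
        have cp: "c > 0" unfolding c_def using dn n0 by simp
        have cn: "c ^ CARD('n) = - 1 / det A" unfolding c_def using dn n0 by (simp add: real_root_pow_pos)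
        have "det (c *\<^sub>R (A ** F)) = 1" unfolding det_smul cn det_mul dF using dn by simp
        moreover have "c *\<^sub>R (A ** F) = dg (\<lambda>k. c * (g k * fl k))" unfolding Ag F_def dg_mult smul_dg ..
        ultimately have "c *\<^sub>R (A ** F) \<in> G" using diagG'[OF HD] by simp
        then show ?thesis unfolding P_def using dn cp comm by auto
      qed
    qed
  next
    fix m n :: 'n
    assume mn: "m \<noteq> n"
    have S: "(\<chi> i j. mat 1 $ i $ Transposition.transpose m n j) = Sw m n" by (simp add: Sw_def)
    have "Sw m n ** F \<in> G" using G_SO orthogonal_matrix_mul[OF Sw_orth oF] Sw_det[OF mn] dF by (simp add: det_mul)
    moreover have "F ** Sw m n \<in> G" using G_SO orthogonal_matrix_mul[OF oF Sw_orth] Sw_det[OF mn] dF by (simp add: det_mul)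
    ultimately show "P (\<chi> i j. mat 1 $ i $ Transposition.transpose m n j)"
      unfolding S P_def using Sw_det[OF mn] by (intro disjI2) (auto intro!: exI[of _ 1])
  next
    fix m n :: 'n and c :: real
    assume mn: "m \<noteq> n"
    have E: "(\<chi> i j. if i = m \<and> j = n then c else of_bool (i = j)) = pl m n 1 c 0 1" by (rule idplus_pl[OF mn])
    have "pl m n 1 c 0 1 \<in> G" by (rule transv[OF HD mn])
    moreover have "F ** pl m n 1 c 0 1 ** F \<in> G"
      unfolding F_def dg_conj_pl[OF mn fl2] by (rule transv[OF HD mn])
    ultimately show "P (\<chi> i j. if i = m \<and> j = n then c else of_bool (i = j))"
      unfolding E P_def using det_pl_E[OF mn, of c] by (intro disjI2 disjI1) (auto intro!: exI[of _ 1])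
  qed
  then obtain c where c: "c > 0" "c *\<^sub>R A \<in> G" unfolding P_def using A1 by auto
  have "c ^ CARD('n) = 1" using G_SL[OF c(2)] A1 unfolding det_smul by simp
  then have "c = 1" using c(1) n0 by (metis less_le power_eq_iff_eq_base power_one zero_less_one)
  then show ?thesis using c(2) by simp
qed

end


lemma ip_mv: "(A *v x) \<bullet> y = x \<bullet> (transpose A *v (y::real^'n))" for A :: "real^'n^'n"
proof -
  have "(A *v x) \<bullet> y = y \<bullet> (A *v x)" by (rule inner_commute)
  also have "\<dots> = (y v* A) \<bullet> x" by (rule dot_lmul_matrix[symmetric])
  also have "\<dots> = x \<bullet> (y v* A)" by (rule inner_commute)
  also have "\<dots> = x \<bullet> (transpose A *v y)" by (simp only: transpose_matrix_vector)
  finally show ?thesis .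
qed

lemma orth_TQ: "orthogonal_matrix Q \<Longrightarrow> transpose Q *v (Q *v x) = (x::real^'n)" for Q :: "real^'n^'n"
  unfolding orthogonal_matrix_def by (simp only: matrix_vector_mul_assoc matrix_vector_mul_lid)

lemma orth_QT: "orthogonal_matrix Q \<Longrightarrow> Q *v (transpose Q *v x) = (x::real^'n)" for Q :: "real^'n^'n"
  unfolding orthogonal_matrix_def by (simp only: matrix_vector_mul_assoc matrix_vector_mul_lid)

lemma orth_ip: "orthogonal_matrix Q \<Longrightarrow> (Q *v x) \<bullet> (Q *v y) = x \<bullet> (y::real^'n)" for Q :: "real^'n^'n"
  by (simp only: ip_mv orth_TQ)

lemma orth_norm: "orthogonal_matrix Q \<Longrightarrow> norm (Q *v x) = norm (x::real^'n)" for Q :: "real^'n^'n"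
  by (simp add: norm_eq_sqrt_inner orth_ip)

lemma pl_axis_i: "i \<noteq> j \<Longrightarrow> pl i j p q r s *v axis i 1 = p *\<^sub>R axis i 1 + r *\<^sub>R axis j 1"
  by (simp add: pl_mv vec_eq_iff axis_def)

lemma pl_axis_j: "i \<noteq> j \<Longrightarrow> pl i j p q r s *v axis j 1 = q *\<^sub>R axis i 1 + s *\<^sub>R axis j 1"
  by (simp add: pl_mv vec_eq_iff axis_def)

lemma pl_fix: "i \<noteq> j \<Longrightarrow> v $ i = 0 \<Longrightarrow> v $ j = 0 \<Longrightarrow> pl i j p q r s *v v = v"
  by (simp add: pl_mv vec_eq_iff)

lemma dg_axis: "dg f *v axis k 1 = f k *\<^sub>R axis k 1"
  unfolding matrix_vector_mult_basis column_def by (simp add: vec_eq_iff dg_entry axis_def)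

lemma cols_eq:
  fixes X Y :: "real^'n^'n"
  assumes "\<And>k. X *v axis k 1 = Y *v axis k 1"
  shows "X = Y"
proof -
  have "column k X = column k Y" for k using assms[of k] by (simp add: matrix_vector_mult_basis)
  then show ?thesis by (simp add: vec_eq_iff column_def)
qed

lemma quad0:
  fixes a b :: real
  assumes "\<And>t. t * a \<le> t^2 * b"
  shows "a = 0"
proof (rule ccontr)
  assume a0: "a \<noteq> 0"
  define c where "c = \<bar>b\<bar> + 1"
  have cp: "c > 0" unfolding c_def by simp
  define t where "t = a / (2 * c)"
  have t0: "t \<noteq> 0" unfolding t_def using a0 cp by simp
  have t2: "t^2 > 0" using t0 by simp
  have tc: "t * (2 * c) = a" unfolding t_def using cp by simp
  have "t^2 * b \<le> t^2 * \<bar>b\<bar>" using t2 by (simp add: mult_left_mono)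
  also have "\<dots> < t^2 * (2 * c)" using t2 unfolding c_def by (intro mult_strict_left_mono) auto
  also have "\<dots> = t * a" using tc by (simp add: power2_eq_square mult.assoc)
  finally have "t^2 * b < t * a" .
  with assms[of t] show False by simp
qed



lemma house:
  fixes a b e :: "real^'n"
  assumes na: "norm a = 1" and nb: "norm b = 1" and ea: "e \<bullet> a = 0" and eb: "e \<bullet> b = 0"
  shows "\<exists>Q. orthogonal_matrix Q \<and> Q *v a = b \<and> Q *v e = e"
proof (cases "a = b")
  case True
  then show ?thesis by (intro exI[of _ "mat 1"]) (simp add: orthogonal_matrix_id)
next
  case False
  define v where "v = a - b"
  have vv: "v \<bullet> v \<noteq> 0" using False unfolding v_def by simp
  define h where "h = (\<lambda>u. u - (2 * (u \<bullet> v) / (v \<bullet> v)) *\<^sub>R v)"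
  have lh: "linear h" unfolding h_def
    by (rule linearI) (simp_all add: inner_add_left algebra_simps add_divide_distrib scaleR_add_left)
  have nh: "norm (h u) = norm u" for u
  proof -
    have "norm (h u)^2 = norm u^2"
      unfolding h_def power2_norm_eq_inner using vv
      by (simp add: inner_diff_left inner_diff_right inner_commute field_simps power2_eq_square)
    then show ?thesis by (simp add: power2_eq_iff_nonneg)
  qed
  have oh: "orthogonal_transformation h" unfolding orthogonal_transformation using lh nh by simp
  have aa: "a \<bullet> a = 1" "b \<bullet> b = 1" using na nb by (simp_all add: norm_eq_1)
  have av: "a \<bullet> v = 1 - a \<bullet> b" unfolding v_def using aa by (simp add: inner_diff_right)
  have vv2: "v \<bullet> v = 2 * (1 - a \<bullet> b)" unfolding v_def using aa by (simp add: inner_diff_left inner_diff_right inner_commute)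
  have e2: "2 * (a \<bullet> v) = v \<bullet> v" using av vv2 by simp
  have "2 * (a \<bullet> v) / (v \<bullet> v) = 1" unfolding e2 using vv by (rule divide_self)
  then have "h a = a - v" unfolding h_def by (simp only:) simp
  then have ha: "h a = b" unfolding v_def by simp
  have "e \<bullet> v = 0" unfolding v_def using ea eb by (simp add: inner_diff_right)
  then have he: "h e = e" unfolding h_def by simp
  show ?thesis
  proof (intro exI[of _ "matrix h"] conjI)
    show "orthogonal_matrix (matrix h)" using oh orthogonal_transformation_matrix by blast
    have mw: "matrix h *v u = h u" for u using matrix_vector_mul(2)[OF lh] by metis
    show "matrix h *v a = b" using mw ha by simp
    show "matrix h *v e = e" using mw he by simp
  qed
qed

lemma flipj_props:
  fixes j :: "'n::finite"
  defines "Fj \<equiv> dg (\<lambda>k. if k = j then -1 else (1::real)) :: real^'n^'n"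
  shows "orthogonal_matrix Fj" "det Fj = -1" "\<And>k. k \<noteq> j \<Longrightarrow> Fj *v axis k 1 = axis k 1"
    "Fj *v axis j 1 = (-1) *\<^sub>R axis j 1"
proof -
  have "transpose Fj ** Fj = mat 1" unfolding Fj_def transpose_dg dg_mult
    by (simp add: dg_one[symmetric] cong: if_cong) (rule arg_cong[where f=dg], auto)
  then show "orthogonal_matrix Fj" unfolding orthogonal_matrix .
  have "det Fj = prod (\<lambda>k. if k = j then -1 else (1::real)) UNIV" unfolding Fj_def det_dg ..
  also have "\<dots> = (if j = j then -1 else 1) * prod (\<lambda>k. if k = j then -1 else (1::real)) (UNIV - {j})"
    by (simp add: prod.remove)
  also have "prod (\<lambda>k. if k = j then -1 else (1::real)) (UNIV - {j}) = 1" by (rule prod.neutral) simp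
  finally show "det Fj = -1" by simp
  show "\<And>k. k \<noteq> j \<Longrightarrow> Fj *v axis k 1 = axis k 1" unfolding Fj_def dg_axis by simp
  show "Fj *v axis j 1 = (-1) *\<^sub>R axis j 1" unfolding Fj_def dg_axis by simp
qed

lemma pair_SO:
  fixes p q :: "real^'n" and i j :: "'n::finite"
  assumes ij: "i \<noteq> j" and np: "norm p = 1" and nq: "norm q = 1" and pq: "p \<bullet> q = 0"
  shows "\<exists>Q \<epsilon>. orthogonal_matrix Q \<and> det Q = 1 \<and> (\<epsilon> = 1 \<or> \<epsilon> = -1) \<and>
           Q *v axis i 1 = p \<and> Q *v axis j 1 = \<epsilon> *\<^sub>R q"
proof -
  obtain Q1 where oQ1: "orthogonal_matrix Q1" and Q1i: "Q1 *v axis i 1 = p"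
    using orthogonal_matrix_exists_basis[OF np] by metis
  define q1 where "q1 = transpose Q1 *v q"
  have nq1: "norm q1 = 1" unfolding q1_def using oQ1 nq orth_norm[of "transpose Q1" q] by simp
  have "q1 \<bullet> axis i 1 = q \<bullet> (Q1 *v axis i 1)" unfolding q1_def ip_mv by simp
  then have q1i: "axis i 1 \<bullet> q1 = 0" using Q1i pq by (simp add: inner_commute)
  have eja: "axis i 1 \<bullet> axis j (1::real) = 0" using ij by (simp add: inner_axis_axis)
  obtain Q2 where oQ2: "orthogonal_matrix Q2" and Q2j: "Q2 *v axis j 1 = q1" and Q2i: "Q2 *v axis i 1 = axis i 1"
    using house[of "axis j 1" q1 "axis i 1"] nq1 q1i eja by auto
  define Q where "Q = Q1 ** Q2"
  have oQ: "orthogonal_matrix Q" unfolding Q_def using oQ1 oQ2 by (rule orthogonal_matrix_mul)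
  have Qi: "Q *v axis i 1 = p" unfolding Q_def using Q2i Q1i by (simp flip: matrix_vector_mul_assoc)
  have Qj: "Q *v axis j 1 = q" unfolding Q_def using Q2j orth_QT[OF oQ1] unfolding q1_def
    by (simp flip: matrix_vector_mul_assoc)
  have "det Q = 1 \<or> det Q = -1" by (rule det_orthogonal_matrix[OF oQ])
  then show ?thesis
  proof
    assume "det Q = 1"
    then show ?thesis using oQ Qi Qj by (intro exI[of _ Q] exI[of _ 1]) simp
  next
    assume dQ: "det Q = -1"
    define Fj :: "real^'n^'n" where "Fj = dg (\<lambda>k. if k = j then -1 else (1::real))"
    note fp = flipj_props[where j=j, folded Fj_def]
    show ?thesis
    proof (intro exI[of _ "Q ** Fj"] exI[of _ "-1"] conjI)
      show "orthogonal_matrix (Q ** Fj)" using oQ fp(1) by (rule orthogonal_matrix_mul)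
      show "det (Q ** Fj) = 1" using dQ fp(2) by (simp add: det_mul)
      show "(Q ** Fj) *v axis i 1 = p" using fp(3)[OF ij] Qi by (simp flip: matrix_vector_mul_assoc)
      show "(Q ** Fj) *v axis j 1 = (-1) *\<^sub>R q"
        by (simp only: matrix_vector_mul_assoc[symmetric] fp(4) matrix_vector_mult_scaleR Qj)
    qed simp
  qed
qed



lemma expand_sq: "(a + t *\<^sub>R b) \<bullet> (a + t *\<^sub>R b) = a \<bullet> a + 2 * t * (a \<bullet> b) + t^2 * (b \<bullet> (b::real^'n))"
  by (simp add: inner_add_left inner_add_right inner_commute power2_eq_square algebra_simps)

lemma extremal:
  fixes g :: "real^'n^'n"
  assumes dg: "det g = 1" and no: "\<not> orthogonal_matrix g"
  shows "\<exists>x z \<sigma> \<tau>. norm x = 1 \<and> norm z = 1 \<and> x \<bullet> z = 0 \<and> \<sigma> > \<tau> \<and> \<tau> > 0 \<and>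
     norm (g *v x) = \<sigma> \<and> norm (g *v z) = \<tau> \<and>
     (\<forall>w. (g *v x) \<bullet> (g *v w) = \<sigma>^2 * (x \<bullet> w)) \<and> (\<forall>w. (g *v z) \<bullet> (g *v w) = \<tau>^2 * (z \<bullet> w))"
proof -
  define S where "S = sphere (0::real^'n) 1"
  obtain i0 :: 'n where True by simp
  have cS: "compact S" unfolding S_def by simp
  have nS: "S \<noteq> {}" unfolding S_def using norm_axis_1[of i0] by (metis empty_iff mem_sphere_0)
  have cf: "continuous_on S (\<lambda>y. norm (g *v y))"
    by (intro continuous_intros)
  obtain x where xS: "x \<in> S" and xmax: "\<And>y. y \<in> S \<Longrightarrow> norm (g *v y) \<le> norm (g *v x)"
    using continuous_attains_sup[OF cS nS cf] by blast
  obtain z where zS: "z \<in> S" and zmin: "\<And>y. y \<in> S \<Longrightarrow> norm (g *v z) \<le> norm (g *v y)"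
    using continuous_attains_inf[OF cS nS cf] by blast
  have nx: "norm x = 1" and nz: "norm z = 1" using xS zS unfolding S_def by auto
  define \<sigma> where "\<sigma> = norm (g *v x)"
  define \<tau> where "\<tau> = norm (g *v z)"
  have scale: "g *v v = norm v *\<^sub>R (g *v (v /\<^sub>R norm v))" if "v \<noteq> 0" for v
    using that by (simp add: matrix_vector_mult_scaleR)
  have up: "norm (g *v v) \<le> \<sigma> * norm v" for v
  proof (cases "v = 0")
    case True then show ?thesis by simp
  next
    case False
    have "v /\<^sub>R norm v \<in> S" unfolding S_def using False by simp
    then have h1: "norm (g *v (v /\<^sub>R norm v)) \<le> \<sigma>" unfolding \<sigma>_def by (rule xmax)
    have "norm (g *v v) = norm v * norm (g *v (v /\<^sub>R norm v))" using scale[OF False] by simp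
    also have "\<dots> \<le> norm v * \<sigma>" using h1 by (simp add: mult_left_mono)
    finally show ?thesis by (simp add: mult.commute)
  qed
  have lo: "\<tau> * norm v \<le> norm (g *v v)" for v
  proof (cases "v = 0")
    case True then show ?thesis by simp
  next
    case False
    have "v /\<^sub>R norm v \<in> S" unfolding S_def using False by simp
    then have h1: "\<tau> \<le> norm (g *v (v /\<^sub>R norm v))" unfolding \<tau>_def by (rule zmin)
    have "\<tau> * norm v \<le> norm (g *v (v /\<^sub>R norm v)) * norm v" using h1 by (rule mult_right_mono) simp
    also have "\<dots> = norm v * norm (g *v (v /\<^sub>R norm v))" by (rule mult.commute)
    also have "\<dots> = norm (g *v v)" using scale[OF False] by simp
    finally show ?thesis .
  qed
  have gz: "g *v z \<noteq> 0"
  proof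
    assume "g *v z = 0"
    then have "matrix_inv g *v (g *v z) = 0" by simp
    then have "z = 0" using minv(2)[of g] dg by (simp add: matrix_vector_mul_assoc)
    then show False using nz by simp
  qed
  have tp: "\<tau> > 0" unfolding \<tau>_def using gz by simp
  have st: "\<tau> \<le> \<sigma>" unfolding \<tau>_def \<sigma>_def using zmin[OF xS] .
  have sx: "(g *v x) \<bullet> (g *v x) = \<sigma>^2" unfolding \<sigma>_def by (simp add: power2_norm_eq_inner)
  have sz: "(g *v z) \<bullet> (g *v z) = \<tau>^2" unfolding \<tau>_def by (simp add: power2_norm_eq_inner)
  have xx: "x \<bullet> x = 1" and zz: "z \<bullet> z = 1" using nx nz by (simp_all add: norm_eq_1)
  have statx: "(g *v x) \<bullet> (g *v w) = \<sigma>^2 * (x \<bullet> w)" for w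
  proof -
    have "t * (2 * ((g *v x) \<bullet> (g *v w) - \<sigma>^2 * (x \<bullet> w))) \<le> t^2 * (\<sigma>^2 * (w \<bullet> w) - (g *v w) \<bullet> (g *v w))" for t
    proof -
      have "norm (g *v (x + t *\<^sub>R w)) \<le> \<sigma> * norm (x + t *\<^sub>R w)" by (rule up)
      then have "norm (g *v (x + t *\<^sub>R w))^2 \<le> (\<sigma> * norm (x + t *\<^sub>R w))^2"
        by (rule power_mono) simp
      then have "(g *v x + t *\<^sub>R (g *v w)) \<bullet> (g *v x + t *\<^sub>R (g *v w)) \<le> \<sigma>^2 * ((x + t *\<^sub>R w) \<bullet> (x + t *\<^sub>R w))"
        by (simp add: power2_norm_eq_inner power_mult_distrib matrix_vector_right_distrib matrix_vector_mult_scaleR)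
      then have "\<sigma>^2 + 2 * t * ((g *v x) \<bullet> (g *v w)) + t^2 * ((g *v w) \<bullet> (g *v w)) \<le> \<sigma>^2 * (1 + 2 * t * (x \<bullet> w) + t^2 * (w \<bullet> w))"
        unfolding expand_sq sx xx .
      then show ?thesis by (simp add: algebra_simps)
    qed
    then have "2 * ((g *v x) \<bullet> (g *v w) - \<sigma>^2 * (x \<bullet> w)) = 0" by (rule quad0)
    then show ?thesis by simp
  qed
  have statz: "(g *v z) \<bullet> (g *v w) = \<tau>^2 * (z \<bullet> w)" for w
  proof -
    have "t * (2 * (\<tau>^2 * (z \<bullet> w) - (g *v z) \<bullet> (g *v w))) \<le> t^2 * ((g *v w) \<bullet> (g *v w) - \<tau>^2 * (w \<bullet> w))" for t
    proof -
      have "\<tau> * norm (z + t *\<^sub>R w) \<le> norm (g *v (z + t *\<^sub>R w))" by (rule lo)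
      then have "(\<tau> * norm (z + t *\<^sub>R w))^2 \<le> norm (g *v (z + t *\<^sub>R w))^2"
        by (rule power_mono) (use tp in simp)
      then have "\<tau>^2 * ((z + t *\<^sub>R w) \<bullet> (z + t *\<^sub>R w)) \<le> (g *v z + t *\<^sub>R (g *v w)) \<bullet> (g *v z + t *\<^sub>R (g *v w))"
        by (simp add: power2_norm_eq_inner power_mult_distrib matrix_vector_right_distrib matrix_vector_mult_scaleR)
      then have "\<tau>^2 * (1 + 2 * t * (z \<bullet> w) + t^2 * (w \<bullet> w)) \<le> \<tau>^2 + 2 * t * ((g *v z) \<bullet> (g *v w)) + t^2 * ((g *v w) \<bullet> (g *v w))"
        unfolding expand_sq sz zz .
      then show ?thesis by (simp add: algebra_simps)
    qed
    then have "2 * (\<tau>^2 * (z \<bullet> w) - (g *v z) \<bullet> (g *v w)) = 0" by (rule quad0)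
    then show ?thesis by simp
  qed
  have sne: "\<sigma> \<noteq> \<tau>"
  proof
    assume eq: "\<sigma> = \<tau>"
    have sp: "\<sigma> > 0" using tp eq by simp
    have iso: "norm (g *v v) = \<sigma> * norm v" for v using up[of v] lo[of v] eq by simp
    define Q where "Q = (1/\<sigma>) *\<^sub>R g"
    have Qv: "Q *v v = (1/\<sigma>) *\<^sub>R (g *v v)" for v unfolding Q_def by (simp add: scaleR_matrix_vector_assoc)
    have "norm (Q *v v) = norm v" for v unfolding Qv using iso sp by simp
    then have "orthogonal_transformation ((*v) Q)" unfolding orthogonal_transformation by simp
    then have oQ: "orthogonal_matrix Q" using orthogonal_transformation_matrix[of "(*v) Q"] by simp
    have gQ: "g = \<sigma> *\<^sub>R Q" unfolding Q_def using sp by simp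
    have "det g = \<sigma> ^ CARD('n) * det Q" unfolding gQ det_smul ..
    moreover have "det Q = 1 \<or> det Q = -1" by (rule det_orthogonal_matrix[OF oQ])
    moreover have "\<sigma> ^ CARD('n) > 0" using sp by simp
    ultimately have "\<sigma> ^ CARD('n) = 1" using dg by auto
    then have "\<sigma> = 1" using sp by (metis less_le power_eq_iff_eq_base power_one zero_less_card_finite zero_less_one)
    then have "g = Q" using gQ by simp
    with oQ no show False by simp
  qed
  with st have sgt: "\<sigma> > \<tau>" by simp
  have xz: "x \<bullet> z = 0"
  proof -
    have "\<sigma>^2 * (x \<bullet> z) = \<tau>^2 * (z \<bullet> x)" using statx[of z] statz[of x] by (simp add: inner_commute)
    then have "(\<sigma>^2 - \<tau>^2) * (x \<bullet> z) = 0" by (simp add: algebra_simps inner_commute)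
    moreover have "\<tau>^2 < \<sigma>^2" using sgt tp by (intro power_strict_mono) auto
    then have "\<sigma>^2 - \<tau>^2 \<noteq> 0" by simp
    ultimately show ?thesis by simp
  qed
  show ?thesis
    using nx nz xz sgt tp statx statz unfolding \<sigma>_def \<tau>_def by blast
qed



context grp begin

lemma HD_from:
  fixes i j :: 'n
  assumes gG: "g \<in> G" and gS: "g \<notin> SO" and ij: "i \<noteq> j"
  shows "\<exists>a>1. pl i j a 0 0 (1/a) \<in> G"
proof -
  have dg1: "det g = 1" using G_SL[OF gG] .
  have no: "\<not> orthogonal_matrix g" using gS dg1 by (auto simp: SO_def)
  obtain x z \<sigma> \<tau> where nx: "norm x = 1" and nz: "norm z = 1" and xz: "x \<bullet> z = 0"
    and sgt: "\<sigma> > \<tau>" and tp: "\<tau> > 0" and gx: "norm (g *v x) = \<sigma>" and gzn: "norm (g *v z) = \<tau>"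
    and statx: "\<And>w. (g *v x) \<bullet> (g *v w) = \<sigma>^2 * (x \<bullet> w)"
    and statz: "\<And>w. (g *v z) \<bullet> (g *v w) = \<tau>^2 * (z \<bullet> w)"
    using extremal[OF dg1 no] by blast
  have sp: "\<sigma> > 0" using sgt tp by simp
  define y where "y = (1/\<sigma>) *\<^sub>R (g *v x)"
  define w where "w = (1/\<tau>) *\<^sub>R (g *v z)"
  have ny: "norm y = 1" unfolding y_def using gx sp by simp
  have nw: "norm w = 1" unfolding w_def using gzn tp by simp
  have yw: "y \<bullet> w = 0" unfolding y_def w_def using statx[of z] xz by simp
  have gxy: "g *v x = \<sigma> *\<^sub>R y" unfolding y_def using sp by simp
  have gzw: "g *v z = \<tau> *\<^sub>R w" unfolding w_def using tp by simp
  obtain Q2 e2 where oQ2: "orthogonal_matrix Q2" "det Q2 = 1" and e2: "e2 = 1 \<or> e2 = -1"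
    and Q2i: "Q2 *v axis i 1 = x" and Q2j: "Q2 *v axis j 1 = e2 *\<^sub>R z"
    using pair_SO[OF ij nx nz xz] by blast
  obtain Q1 e1 where oQ1: "orthogonal_matrix Q1" "det Q1 = 1" and e1: "e1 = 1 \<or> e1 = -1"
    and Q1i: "Q1 *v axis i 1 = y" and Q1j: "Q1 *v axis j 1 = e1 *\<^sub>R w"
    using pair_SO[OF ij ny nw yw] by blast
  have e11: "e1 * e1 = 1" and e22: "e2 * e2 = 1" using e1 e2 by auto
  define A where "A = transpose Q1 ** g ** Q2"
  have oQ1T: "orthogonal_matrix (transpose Q1)" using oQ1 by simp
  have AG: "A \<in> G" unfolding A_def using G_SO[OF oQ1T] G_SO[OF oQ2] oQ1 gG G_mul by simp
  have Av: "A *v v = transpose Q1 *v (g *v (Q2 *v v))" for v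
    unfolding A_def by (simp only: matrix_vector_mul_assoc matrix_mul_assoc)
  have Ai: "A *v axis i 1 = \<sigma> *\<^sub>R axis i 1"
    unfolding Av Q2i gxy matrix_vector_mult_scaleR Q1i[symmetric] orth_TQ[OF oQ1(1)] ..
  define d where "d = e1 * e2 * \<tau>"
  have d2: "d * d = \<tau> * \<tau>" unfolding d_def using e11 e22 by (simp add: algebra_simps)
  have d0: "d \<noteq> 0" unfolding d_def using e1 e2 tp by auto
  have wQ: "w = e1 *\<^sub>R (Q1 *v axis j 1)" unfolding Q1j using e11 by simp
  have Aj: "A *v axis j 1 = d *\<^sub>R axis j 1"
    unfolding Av Q2j matrix_vector_mult_scaleR gzw wQ orth_TQ[OF oQ1(1)] d_def by (simp add: algebra_simps)
  have Ak: "(A *v axis k 1) $ i = 0 \<and> (A *v axis k 1) $ j = 0" if "k \<noteq> i" "k \<noteq> j" for k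
  proof -
    define u where "u = Q2 *v axis k 1"
    have "(A *v axis k 1) $ i = (transpose Q1 *v (g *v u)) \<bullet> axis i 1"
      unfolding Av u_def by (simp add: cart_eq_inner_axis)
    also have "\<dots> = (g *v u) \<bullet> y" unfolding ip_mv transpose_transpose Q1i ..
    also have "\<dots> = (1/\<sigma>) * ((g *v x) \<bullet> (g *v u))" unfolding y_def by (simp add: inner_commute)
    also have "\<dots> = \<sigma> * (x \<bullet> u)" unfolding statx using sp by (simp add: power2_eq_square)
    also have "x \<bullet> u = 0" unfolding u_def Q2i[symmetric] orth_ip[OF oQ2(1)] using that
      by (simp add: inner_axis_axis)
    finally have 1: "(A *v axis k 1) $ i = 0" by simp
    have "(A *v axis k 1) $ j = (transpose Q1 *v (g *v u)) \<bullet> axis j 1"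
      unfolding Av u_def by (simp add: cart_eq_inner_axis)
    also have "\<dots> = (g *v u) \<bullet> (e1 *\<^sub>R w)" unfolding ip_mv transpose_transpose Q1j ..
    also have "\<dots> = (e1/\<tau>) * ((g *v z) \<bullet> (g *v u))" unfolding w_def by (simp add: inner_commute)
    also have "\<dots> = e1 * \<tau> * (z \<bullet> u)" unfolding statz using tp by (simp add: power2_eq_square)
    also have "z \<bullet> u = 0"
    proof -
      have "z = e2 *\<^sub>R (Q2 *v axis j 1)" unfolding Q2j using e22 by simp
      then have "z \<bullet> u = e2 * ((Q2 *v axis j 1) \<bullet> (Q2 *v axis k 1))" unfolding u_def by simp
      also have "\<dots> = 0" unfolding orth_ip[OF oQ2(1)] using that by (simp add: inner_axis_axis)
      finally show ?thesis .
    qed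
    finally have 2: "(A *v axis k 1) $ j = 0" by simp
    from 1 2 show ?thesis ..
  qed
  define r where "r = rot i j 0 1"
  have rS: "r \<in> SO" unfolding r_def by (rule rot_SO[OF ij]) simp
  have rr: "r = pl i j 0 (-1) 1 0" unfolding r_def rot_def by simp
  have rT: "transpose r = pl i j 0 1 (-1) 0" unfolding rr pl_transpose[OF ij] ..
  define Y where "Y = pl i j (\<sigma>/d) 0 0 (d/\<sigma>)"
  define M where "M = r ** A ** transpose r"
  have ro: "orthogonal_matrix r" "det r = 1" using rS by (auto simp: SO_def)
  have rG: "r \<in> G" using G_SO[OF ro] .
  have rTG: "transpose r \<in> G" using ro by (intro G_SO) simp_all
  have MG: "M \<in> G" unfolding M_def using G_mul[OF G_mul[OF rG AG] rTG] .
  have YM: "Y ** M = A"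
  proof (rule cols_eq)
    fix k
    have YMv: "(Y ** M) *v v = Y *v (r *v (A *v (transpose r *v v)))" for v
      unfolding M_def by (simp only: matrix_vector_mul_assoc matrix_mul_assoc)
    show "(Y ** M) *v axis k 1 = A *v axis k 1"
    proof (cases "k = i")
      case True
      have t1: "transpose r *v axis i 1 = (-1) *\<^sub>R axis j 1" unfolding rT pl_axis_i[OF ij] by simp
      have t2: "A *v ((-1) *\<^sub>R axis j 1) = (- d) *\<^sub>R axis j 1" unfolding matrix_vector_mult_scaleR Aj by simp
      have t3: "r *v ((- d) *\<^sub>R axis j 1) = d *\<^sub>R axis i 1" unfolding matrix_vector_mult_scaleR rr pl_axis_j[OF ij] by simp
      have t4: "Y *v (d *\<^sub>R axis i 1) = \<sigma> *\<^sub>R axis i 1" unfolding matrix_vector_mult_scaleR Y_def pl_axis_i[OF ij] using d0 by simp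
      show ?thesis unfolding YMv True t1 t2 t3 t4 Ai ..
    next
      case ki: False
      show ?thesis
      proof (cases "k = j")
        case True
        have t1: "transpose r *v axis j 1 = axis i 1" unfolding rT pl_axis_j[OF ij] by simp
        have t3: "r *v (\<sigma> *\<^sub>R axis i 1) = \<sigma> *\<^sub>R axis j 1" unfolding matrix_vector_mult_scaleR rr pl_axis_i[OF ij] by simp
        have t4: "Y *v (\<sigma> *\<^sub>R axis j 1) = d *\<^sub>R axis j 1" unfolding matrix_vector_mult_scaleR Y_def pl_axis_j[OF ij] using sp by simp
        show ?thesis unfolding YMv True t1 Ai t3 t4 Aj ..
      next
        case kj: False
        have "transpose r *v axis k 1 = axis k 1" unfolding rT using ki kj ij by (intro pl_fix) (auto simp: axis_def)
        moreover have "r *v (A *v axis k 1) = A *v axis k 1" unfolding rr using Ak[OF ki kj] ij by (intro pl_fix) auto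
        moreover have "Y *v (A *v axis k 1) = A *v axis k 1" unfolding Y_def using Ak[OF ki kj] ij by (intro pl_fix) auto
        ultimately show ?thesis unfolding YMv by simp
      qed
    qed
  qed
  have dM: "det M = 1" using G_SL[OF MG] .
  have "Y = A ** matrix_inv M" using YM minv(1)[of M] dM
    by (metis matrix_mul_assoc matrix_mul_rid zero_neq_one)
  then have YG: "Y \<in> G" using AG G_inv[OF MG] G_mul by simp
  define a where "a = (\<sigma>/\<tau>)^2"
  have "\<tau>^2 < \<sigma>^2" using sgt tp by (intro power_strict_mono) auto
  then have a1: "a > 1" unfolding a_def using tp by (simp add: power_divide)
  have "Y ** Y = pl i j a 0 0 (1/a)"
    unfolding Y_def pl_mult[OF ij] a_def
    apply (rule pl_cong) using d2 d0 sp tp by (simp_all add: power2_eq_square field_simps)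
  then have "pl i j a 0 0 (1/a) \<in> G" using G_mul[OF YG YG] by simp
  with a1 show ?thesis by blast
qed

end

theorem mainTheorem2:
  fixes G :: "(real^'n^'n) set"
  assumes "subgroup_SL G" and "SO \<subseteq> G"
  shows "G = SL \<or> G = SO"
proof -
  interpret grp G using assms by unfold_locales
  show ?thesis
  proof (cases "G = SO")
    case True
    then show ?thesis by simp
  next
    case False
    then obtain g where g: "g \<in> G" "g \<notin> SO" using assms(2) by blast
    have HD: "\<exists>a>1. pl i j a 0 0 (1/a) \<in> G" if "i \<noteq> j" for i j :: 'n
      using HD_from[OF g that] .
    have "SL \<subseteq> G" using SL_sub[OF HD] by (auto simp: SL_def)
    moreover have "G \<subseteq> SL" using assms(1) by (simp add: subgroup_SL_def)
    ultimately show ?thesis by blast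
  qed
qed

end
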